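(* For all positive integers $d\le n$ there exists $\mathcal{A}\subset2^{[n]}$ with $\mathrm{VC}(\mathcal{A}\cap\mathcal{A})\le d$, $\mathrm{VC}(\mathcal{A}\cup\mathcal{A})\le d$ and $|\mathcal{A}|>(n/d)^d$.
   Context: $[n]=\{1,\dots,n\}$. $\mathrm{VC}(\mathcal{F})$ is the largest cardinality of a $Y\subset[n]$ with $\{S\cap Y:S\in\mathcal{F}\}=2^Y$. $\mathcal{A}\cap\mathcal{A}=\{S\cap T:S,T\in\mathcal{A}\}$ and $\mathcal{A}\cup\mathcal{A}=\{S\cup T:S,T\in\mathcal{A}\}$. *)

theory Defs
  imports Complex_Main
begin

definition shatters :: "nat set set \<Rightarrow> nat set \<Rightarrow> bool" where
  "shatters F Y \<longleftrightarrow> (\<lambda>S. S \<inter> Y) ` F = Pow Y"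

definition VC :: "nat \<Rightarrow> nat set set \<Rightarrow> nat" where
  "VC n F = Max (insert 0 {card Y | Y. Y \<subseteq> {1..n} \<and> shatters F Y})"

definition fam_inter :: "nat set set \<Rightarrow> nat set set" where
  "fam_inter A = {S \<inter> T | S T. S \<in> A \<and> T \<in> A}"

definition fam_union :: "nat set set \<Rightarrow> nat set set" where
  "fam_union A = {S \<union> T | S T. S \<in> A \<and> T \<in> A}"

end

theory Submission
  imports Defs "HOL-Library.FuncSet"
begin

definition PP :: "nat \<Rightarrow> nat \<Rightarrow> nat set \<Rightarrow> bool" where
  "PP m d S \<longleftrightarrow> S \<subseteq> {1..m*d} \<and>
     (\<forall>x y. 1 \<le> x \<longrightarrow> x \<le> y \<longrightarrow> y \<in> S \<longrightarrow> (x-1) div m = (y-1) div m \<longrightarrow> x \<in> S)"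

definition SS :: "nat \<Rightarrow> nat \<Rightarrow> (nat \<Rightarrow> nat) \<Rightarrow> nat set" where
  "SS m d k = {x. 1 \<le> x \<and> x \<le> m*d \<and> (x-1) mod m < k ((x-1) div m)}"

lemma PP_inter: "PP m d S \<Longrightarrow> PP m d T \<Longrightarrow> PP m d (S \<inter> T)"
  unfolding PP_def by blast

lemma PP_union: "PP m d S \<Longrightarrow> PP m d T \<Longrightarrow> PP m d (S \<union> T)"
  unfolding PP_def by blast

lemma mod_mono_same_div:
  fixes a b m :: nat
  assumes "a \<le> b" "a div m = b div m"
  shows "a mod m \<le> b mod m"
proof -
  have "a = a div m * m + a mod m" by simp
  moreover have "b = b div m * m + b mod m" by simp
  ultimately show ?thesis using assms by (metis add_le_cancel_left)
qed

lemma PP_SS: "PP m d (SS m d k)"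
  unfolding PP_def SS_def
proof (intro conjI allI impI)
  fix x y assume h: "1 \<le> x" "x \<le> y"
    "y \<in> {x. 1 \<le> x \<and> x \<le> m * d \<and> (x - 1) mod m < k ((x - 1) div m)}"
    "(x - 1) div m = (y - 1) div m"
  have "(x-1) mod m \<le> (y-1) mod m"
    using mod_mono_same_div[of "x-1" "y-1" m] h by simp
  then show "x \<in> {x. 1 \<le> x \<and> x \<le> m * d \<and> (x - 1) mod m < k ((x - 1) div m)}"
    using h by auto
qed auto

lemma shatter_bound:
  assumes m: "m \<ge> 1" and P: "\<And>S. S \<in> F \<Longrightarrow> PP m d S"
    and sh: "shatters F Y"
  shows "card Y \<le> d"
proof -
  have img: "(\<lambda>S. S \<inter> Y) ` F = Pow Y" using sh unfolding shatters_def .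
  have Ysub: "Y \<subseteq> {1..m*d}"
  proof
    fix y assume y: "y \<in> Y"
    have "Y \<in> (\<lambda>S. S \<inter> Y) ` F" using img by auto
    then obtain S where "S \<in> F" "Y = S \<inter> Y" by auto
    then show "y \<in> {1..m*d}" using P[of S] y unfolding PP_def by auto
  qed
  have inj: "inj_on (\<lambda>y. (y-1) div m) Y"
  proof (rule inj_onI, rule ccontr)
    fix x y assume xy: "x \<in> Y" "y \<in> Y" "(x-1) div m = (y-1) div m" "x \<noteq> y"
    { fix a b assume ab: "a \<in> Y" "b \<in> Y" "(a-1) div m = (b-1) div m" "a < b"
      have "{b} \<in> (\<lambda>S. S \<inter> Y) ` F" using img ab by auto
      then obtain S where S: "S \<in> F" "{b} = S \<inter> Y" by auto
      have "b \<in> S" using S by auto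
      moreover have "1 \<le> a" using Ysub ab by auto
      ultimately have "a \<in> S" using P[OF S(1)] ab unfolding PP_def by (meson less_imp_le)
      then have "a \<in> {b}" using S ab by auto
      then have False using ab by auto }
    then show False using xy by (metis linorder_neqE_nat)
  qed
  have "(\<lambda>y. (y-1) div m) ` Y \<subseteq> {..<d}"
  proof
    fix z assume "z \<in> (\<lambda>y. (y-1) div m) ` Y"
    then obtain y where y: "y \<in> Y" "z = (y-1) div m" by auto
    have "y \<in> {1..m*d}" using Ysub y by auto
    then have "y - 1 < m * d" by auto
    then have "(y-1) div m < d" using m by (simp add: div_less_iff_less_mult mult.commute)
    then show "z \<in> {..<d}" using y by auto
  qed
  then have "card ((\<lambda>y. (y-1) div m) ` Y) \<le> d"
    by (metis card_lessThan card_mono finite_lessThan)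
  then show ?thesis using card_image[OF inj] by simp
qed

lemma VC_bound:
  assumes m: "m \<ge> 1" and P: "\<And>S. S \<in> F \<Longrightarrow> PP m d S"
  shows "VC n F \<le> d"
proof -
  have fin: "finite {card Y | Y. Y \<subseteq> {1..n} \<and> shatters F Y}"
  proof (rule finite_subset)
    show "{card Y | Y. Y \<subseteq> {1..n} \<and> shatters F Y} \<subseteq> card ` Pow {1..n}" by auto
  qed auto
  show ?thesis unfolding VC_def
    using fin shatter_bound[OF m P] by (auto intro!: Max.boundedI)
qed

theorem proposition11:
  fixes n d :: nat
  assumes "1 \<le> d" and "d \<le> n"
  shows "\<exists>A. A \<subseteq> Pow {1..n} \<and> VC n (fam_inter A) \<le> d \<and> VC n (fam_union A) \<le> d
              \<and> real (card A) > (real n / real d) ^ d"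
proof -
  define m where "m = n div d"
  have m1: "m \<ge> 1" using assms unfolding m_def using div_le_mono[of d n d] by simp
  have md: "m * d \<le> n" unfolding m_def by (simp add: div_times_less_eq_dividend)
  define K where "K = PiE {..<d} (\<lambda>_. {0..m})"
  define A where "A = SS m d ` K"
  have PA: "\<And>S. S \<in> A \<Longrightarrow> PP m d S" unfolding A_def using PP_SS by auto
  have sub: "A \<subseteq> Pow {1..n}"
  proof
    fix S assume "S \<in> A"
    then have "S \<subseteq> {1..m*d}" using PA unfolding PP_def by auto
    then show "S \<in> Pow {1..n}" using md by auto
  qed
  have vi: "VC n (fam_inter A) \<le> d"
    by (rule VC_bound[OF m1]) (auto simp: fam_inter_def intro: PP_inter PA)
  have vu: "VC n (fam_union A) \<le> d"
    by (rule VC_bound[OF m1]) (auto simp: fam_union_def intro: PP_union PA)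
  have inj: "inj_on (SS m d) K"
  proof (rule inj_onI, rule ccontr)
    fix k k' assume kk: "k \<in> K" "k' \<in> K" "SS m d k = SS m d k'" "k \<noteq> k'"
    then obtain j where j: "k j \<noteq> k' j" by auto
    have jd: "j < d" using kk j unfolding K_def PiE_def extensional_def by (cases "j < d") auto
    { fix a b assume ab: "a \<in> K" "b \<in> K" "SS m d a = SS m d b" "a j < b j"
      define x where "x = j*m + a j + 1"
      have bj: "b j \<le> m" using ab jd unfolding K_def by auto
      have ajm: "a j < m" using ab bj by linarith
      have xm1: "x - 1 = j*m + a j" unfolding x_def by simp
      have dv: "(x-1) div m = j" using ajm unfolding xm1 by simp
      have mv: "(x-1) mod m = a j" using ajm unfolding xm1 by simp
      have "x \<le> j*m + m" unfolding x_def using ajm by simp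
      also have "\<dots> = (j+1)*m" by simp
      also have "\<dots> \<le> d*m" using jd by (intro mult_right_mono) auto
      finally have xle: "x \<le> m*d" by (simp add: mult.commute)
      have "x \<in> SS m d b" unfolding SS_def using dv mv xle ab by (auto simp: x_def)
      moreover have "x \<notin> SS m d a" unfolding SS_def using dv mv by auto
      ultimately have False using ab by auto }
    then show False using kk j by (metis linorder_neqE_nat)
  qed
  have cardA: "card A = (m+1)^d"
  proof -
    have "card A = card K" unfolding A_def using card_image[OF inj] .
    also have "\<dots> = (m+1)^d" unfolding K_def by (simp add: card_PiE)
    finally show ?thesis .
  qed
  have lt: "real n / real d < real m + 1"
  proof -
    have "n = d * m + n mod d" unfolding m_def by simp
    moreover have "n mod d < d" using assms by simp
    ultimately have "n < d * (m+1)" by (simp add: algebra_simps)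
    then have "real n < real d * (real m + 1)" by (metis of_nat_1 of_nat_add of_nat_less_iff of_nat_mult)
    then show ?thesis using assms by (simp add: divide_less_eq mult.commute)
  qed
  have "(real n / real d) ^ d < (real m + 1) ^ d"
    using lt assms by (intro power_strict_mono) auto
  then have "real (card A) > (real n / real d) ^ d" using cardA by (simp add: add.commute)
  then show ?thesis using sub vi vu by blast
qed

end
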